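(* Let \[ G=\begin{pmatrix}a&b\\ c&d\end{pmatrix},\qquad A=\begin{pmatrix}\alpha&\beta\\ \beta&\gamma\end{pmatrix} \quad(\alpha>0,\ \delta:=\det A=\alpha\gamma-\beta^{2}>0). \] Then there exists a symmetric matrix $S=\begin{pmatrix}s_{11}& s_{12}\\ s_{12}& s_{22}\end{pmatrix}$ satisfying \[ SG+G^TS=2SAS\quad \text{and}\quad \mathrm{trace}(G-AS)=0, \] given as follows: \begin{itemize} \item[(i)] If $\gamma b -\alpha c + \beta(a-d) =0$, then $S = A^{-1}G$, in particular \[ s_{11} = \frac{\gamma a - \beta c}{\alpha\gamma - \beta^2}, \qquad s_{12} = \frac{\gamma b - \beta d}{\alpha\gamma - \beta^2}, \qquad s_{22} = \frac{\alpha d - \beta b}{\alpha\gamma - \beta^2}. \] \item[(ii)] If $a+d=0$, then $S=0$. \item[(iii)] If $a+d \neq 0$ and $\gamma b- \alpha c + \beta(a-d) \neq 0$, then \begin{align*} s_{11} &= \frac{a+d}{ (\alpha \gamma-\beta^2) (a+d)^2 +\big( \gamma b - \alpha c + \beta(a-d)\big)^2} \Big( \gamma a(a+d) + \alpha c^2 - \gamma bc - 2\beta ac \Big), \\ s_{12} &= \frac{a+d}{ (\alpha \gamma-\beta^2) (a+d)^2 +\big( \gamma b - \alpha c + \beta(a-d)\big)^2} \Big( \alpha cd + \gamma ab - 2\beta ad \Big), \\ s_{22} &= \frac{a+d}{ (\alpha \gamma-\beta^2) (a+d)^2 +\big(\gamma b - \alpha c + \beta(a-d)\big)^2} \Big(\alpha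 d(a+d) + \gamma b^2 - \alpha bc - 2\beta bd \Big). \end{align*} \end{itemize}
   Context: All entries are real; $d=2$ dimension is implicit (here $d$ also denotes the matrix entry $g_{22}$). *)

theory Defs
  imports "HOL-Analysis.Analysis"
begin

definition mat2 :: "real \<Rightarrow> real \<Rightarrow> real \<Rightarrow> real \<Rightarrow> real^2^2" where
  "mat2 p q r s = vector [vector [p, q], vector [r, s]]"

definition solves_eq :: "real^2^2 \<Rightarrow> real^2^2 \<Rightarrow> real^2^2 \<Rightarrow> bool" where
  "solves_eq G A S \<longleftrightarrow> transpose S = S \<and>
     S ** G + transpose G ** S = 2 *\<^sub>R (S ** A ** S) \<and> trace (G - A ** S) = 0"

end

theory Submission
  imports Defs
begin


lemma mat2_eq_iff: "mat2 p q r s = mat2 p2 q2 r2 s2 \<longleftrightarrow> p = p2 \<and> q = q2 \<and> r = r2 \<and> s = s2"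
  by (auto simp: mat2_def vec_eq_iff forall_2)

lemma mat2_mult: "mat2 p q r s  ** mat2 p2 q2 r2 s2 =
   mat2 (p * p2 + q * r2) (p * q2 + q * s2) (r * p2 + s * r2) (r * q2 + s * s2)"
  by (simp add: mat2_def matrix_matrix_mult_def vec_eq_iff forall_2 sum_2)

lemma mat2_transpose: "transpose (mat2 p q r s) = mat2 p r q s"
  by (simp add: mat2_def transpose_def vec_eq_iff forall_2)

lemma mat2_trace: "trace (mat2 p q r s) = p + s"
  by (simp add: mat2_def trace_def sum_2)

lemma mat2_add: "mat2 p q r s + mat2 p2 q2 r2 s2 = mat2 (p+p2) (q+q2) (r+r2) (s+s2)"
  by (simp add: mat2_def vec_eq_iff forall_2)

lemma mat2_diff: "mat2 p q r s - mat2 p2 q2 r2 s2 = mat2 (p-p2) (q-q2) (r-r2) (s-s2)"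
  by (simp add: mat2_def vec_eq_iff forall_2)

lemma mat2_scale: "k  *\<^sub>R mat2 p q r s = mat2 (k * p) (k * q) (k * r) (k * s)"
  by (simp add: mat2_def vec_eq_iff forall_2)

lemma mat2_zero: "(0::real^2^2) = mat2 0 0 0 0"
  by (simp add: mat2_def vec_eq_iff forall_2)

lemma mat2_one: "(mat 1::real^2^2) = mat2 1 0 0 1"
  by (simp add: mat2_def mat_def vec_eq_iff forall_2)

lemma solves_eq_mat2: "solves_eq (mat2 a b c d) (mat2 al be be ga) (mat2 p q q s) \<longleftrightarrow>

   p * a + q * c + (a * p + c * q) = 2 * ((p * al + q * be) * p + (p * be + q * ga) * q) \<and>
   p * b + q * d + (a * q + c * s) = 2 * ((p * al + q * be) * q + (p * be + q * ga) * s) \<and>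
   q * a + s * c + (b * p + d * q) = 2 * ((q * al + s * be) * p + (q * be + s * ga) * q) \<and>
   q * b + s * d + (b * q + d * s) = 2 * ((q * al + s * be) * q + (q * be + s * ga) * s) \<and>
   (a - (al * p + be * q)) + (d - (be * q + ga * s)) = 0"
  unfolding solves_eq_def mat2_transpose mat2_mult mat2_add mat2_scale mat2_diff mat2_trace mat2_eq_iff
  by simp

lemma solves_AS:
  "solves_eq (mat2 (al * p + be * q) (al * q + be * s) (be * p + ga * q) (be * q + ga * s)) (mat2 al be be ga) (mat2 p q q s)"
  unfolding solves_eq_mat2 by (simp add: algebra_simps)

lemma matrix_inv_eq:
  fixes A B :: "real^2^2"
  assumes "A  ** B = mat 1" "B  ** A = mat 1"
  shows "matrix_inv A = B"
proof -
  let ?C = "matrix_inv A"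
  have "A  ** ?C = mat 1 \<and> ?C  ** A = mat 1"
    unfolding matrix_inv_def by (rule someI[of _ B]) (use assms in auto)
  then have "?C  ** A = mat 1" by blast
  then have "?C = ?C  ** (A  ** B)" using assms by (simp add: matrix_mul_rid)
  also have "\<dots> = (?C  ** A)  ** B" by (simp add: matrix_mul_assoc)
  also have "\<dots> = B" using \<open>?C  ** A = mat 1\<close> by (simp add: matrix_mul_lid)
  finally show ?thesis .
qed

lemma canc:
  fixes E k s L R :: real
  assumes "E \<noteq> 0" "k * E = s" "E * L = s * R"
  shows "k * L = k * k * R"
proof -
  have "E * (k * L) = E * (k * k * R)"
    using assms(2,3) by (metis mult.assoc mult.commute)
  then show ?thesis using assms(1) by simp
qed

lemma riccati:
  fixes a b c d al be ga k E P Q T :: real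
  assumes E0: "E \<noteq> 0" and kE: "k * E = a + d"
    and Edef: "E = (al * ga - be^2) * (a + d)^2 + (ga * b - al * c + be * (a - d))^2"
    and Pd: "P = ga * a * (a + d) + al * c^2 - ga * b * c - 2 * be * a * c"
    and Qd: "Q = al * c * d + ga * a * b - 2 * be * a * d"
    and Td: "T = al * d * (a + d) + ga * b^2 - al * b * c - 2 * be * b * d"
  shows "solves_eq (mat2 a b c d) (mat2 al be be ga) (mat2 (k * P) (k * Q) (k * Q) (k * T))"
proof -
  have i1: "E * (a * P + c * Q) = (a + d) * (al * P * P + 2 * be * P * Q + ga * Q * Q)"
    unfolding Edef Pd Qd by algebra
  have i2: "E * (b * P + d * Q + a * Q + c * T) = (a + d) * (2 * ((al * P + be * Q) * Q + (be * P + ga * Q) * T))"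
    unfolding Edef Pd Qd Td by algebra
  have i4: "E * (b * Q + d * T) = (a + d) * (al * Q * Q + 2 * be * Q * T + ga * T * T)"
    unfolding Edef Qd Td by algebra
  have i5: "E = al * P + 2 * be * Q + ga * T"
    unfolding Edef Pd Qd Td by algebra
  note c1 = canc[OF E0 kE i1] and c2 = canc[OF E0 kE i2] and c4 = canc[OF E0 kE i4]
  have t5: "a + d = k * (al * P + 2 * be * Q + ga * T)" using kE i5 by simp
  show ?thesis unfolding solves_eq_mat2
  proof (intro conjI)
    show "k * P * a + k * Q * c + (a * (k * P) + c * (k * Q)) =
      2 * ((k * P * al + k * Q * be) * (k * P) + (k * P * be + k * Q * ga) * (k * Q))"
      using c1 by (simp add: algebra_simps)
    show "k * P * b + k * Q * d + (a * (k * Q) + c * (k * T)) =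
      2 * ((k * P * al + k * Q * be) * (k * Q) + (k * P * be + k * Q * ga) * (k * T))"
      using c2 by (simp add: algebra_simps)
    show "k * Q * a + k * T * c + (b * (k * P) + d * (k * Q)) =
      2 * ((k * Q * al + k * T * be) * (k * P) + (k * Q * be + k * T * ga) * (k * Q))"
      using c2 by (simp add: algebra_simps)
    show "k * Q * b + k * T * d + (b * (k * Q) + d * (k * T)) =
      2 * ((k * Q * al + k * T * be) * (k * Q) + (k * Q * be + k * T * ga) * (k * T))"
      using c4 by (simp add: algebra_simps)
    show "a - (al * (k * P) + be * (k * Q)) + (d - (be * (k * Q) + ga * (k * T))) = 0"
      using t5 by (simp add: algebra_simps)
  qed
qed

theorem theorem5p5:
  fixes a b c d \<alpha> \<beta> \<gamma> :: real
  assumes "\<alpha> > 0" and "\<alpha> * \<gamma> - \<beta>^2 > 0"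
  shows "(\<exists>S. solves_eq (mat2 a b c d) (mat2 \<alpha> \<beta> \<beta> \<gamma>) S)
    \<and> (\<gamma> * b - \<alpha> * c + \<beta> * (a - d) = 0 \<longrightarrow>
         solves_eq (mat2 a b c d) (mat2 \<alpha> \<beta> \<beta> \<gamma>) (matrix_inv (mat2 \<alpha> \<beta> \<beta> \<gamma>) ** mat2 a b c d)
       \<and> matrix_inv (mat2 \<alpha> \<beta> \<beta> \<gamma>) ** mat2 a b c d =
           mat2 ((\<gamma> * a - \<beta> * c) / (\<alpha> * \<gamma> - \<beta>^2)) ((\<gamma> * b - \<beta> * d) / (\<alpha> * \<gamma> - \<beta>^2))
                ((\<gamma> * b - \<beta> * d) / (\<alpha> * \<gamma> - \<beta>^2)) ((\<alpha> * d - \<beta> * b) / (\<alpha> * \<gamma> - \<beta>^2)))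
    \<and> (a + d = 0 \<longrightarrow> solves_eq (mat2 a b c d) (mat2 \<alpha> \<beta> \<beta> \<gamma>) 0)
    \<and> (a + d \<noteq> 0 \<and> \<gamma> * b - \<alpha> * c + \<beta> * (a - d) \<noteq> 0 \<longrightarrow>
         (let k = (a + d) / ((\<alpha> * \<gamma> - \<beta>^2) * (a + d)^2 + (\<gamma> * b - \<alpha> * c + \<beta> * (a - d))^2)
          in solves_eq (mat2 a b c d) (mat2 \<alpha> \<beta> \<beta> \<gamma>)
               (mat2 (k * (\<gamma> * a * (a + d) + \<alpha> * c^2 - \<gamma> * b * c - 2 * \<beta> * a * c))
                     (k * (\<alpha> * c * d + \<gamma> * a * b - 2 * \<beta> * a * d))
                     (k * (\<alpha> * c * d + \<gamma> * a * b - 2 * \<beta> * a * d))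
                     (k * (\<alpha> * d * (a + d) + \<gamma> * b^2 - \<alpha> * b * c - 2 * \<beta> * b * d)))))"
proof -
  define D where "D = \<alpha> * \<gamma> - \<beta>^2"
  have D: "D > 0" using assms D_def by simp
  have inv: "matrix_inv (mat2 \<alpha> \<beta> \<beta> \<gamma>) = mat2 (\<gamma>/D) (-\<beta>/D) (-\<beta>/D) (\<alpha>/D)"
    apply (rule matrix_inv_eq)
    using D unfolding mat2_mult mat2_one mat2_eq_iff
    by (auto simp: field_simps) (auto simp: D_def power2_eq_square algebra_simps)
  have P1: "\<gamma> * b - \<alpha> * c + \<beta> * (a - d) = 0 \<longrightarrow>
         solves_eq (mat2 a b c d) (mat2 \<alpha> \<beta> \<beta> \<gamma>) (matrix_inv (mat2 \<alpha> \<beta> \<beta> \<gamma>) ** mat2 a b c d)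
       \<and> matrix_inv (mat2 \<alpha> \<beta> \<beta> \<gamma>) ** mat2 a b c d =
           mat2 ((\<gamma> * a - \<beta> * c) / (\<alpha> * \<gamma> - \<beta>^2)) ((\<gamma> * b - \<beta> * d) / (\<alpha> * \<gamma> - \<beta>^2))
                ((\<gamma> * b - \<beta> * d) / (\<alpha> * \<gamma> - \<beta>^2)) ((\<alpha> * d - \<beta> * b) / (\<alpha> * \<gamma> - \<beta>^2))"
  proof
    assume h: "\<gamma> * b - \<alpha> * c + \<beta> * (a - d) = 0"
    have eq: "matrix_inv (mat2 \<alpha> \<beta> \<beta> \<gamma>) ** mat2 a b c d =
           mat2 ((\<gamma> * a - \<beta> * c) / (\<alpha> * \<gamma> - \<beta>^2)) ((\<gamma> * b - \<beta> * d) / (\<alpha> * \<gamma> - \<beta>^2))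
                ((\<gamma> * b - \<beta> * d) / (\<alpha> * \<gamma> - \<beta>^2)) ((\<alpha> * d - \<beta> * b) / (\<alpha> * \<gamma> - \<beta>^2))"
      unfolding inv mat2_mult mat2_eq_iff using D h unfolding D_def[symmetric]
      by (auto simp: field_simps)
    define p where "p = (\<gamma> * a - \<beta> * c) / D"
    define q where "q = (\<gamma> * b - \<beta> * d) / D"
    define t where "t = (\<alpha> * d - \<beta> * b) / D"
    have Dp: "D * p = \<gamma> * a - \<beta> * c" "D * q = \<gamma> * b - \<beta> * d" "D * q = \<alpha> * c - \<beta> * a"
       "D * t = \<alpha> * d - \<beta> * b"
    proof -
      show "D * p = \<gamma> * a - \<beta> * c" "D * q = \<gamma> * b - \<beta> * d" "D * t = \<alpha> * d - \<beta> * b"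
        using D unfolding p_def q_def t_def by auto
      then show "D * q = \<alpha> * c - \<beta> * a" using h by (simp add: algebra_simps)
    qed
    have G: "mat2 a b c d = mat2 (\<alpha> * p + \<beta> * q) (\<alpha> * q + \<beta> * t) (\<beta> * p + \<gamma> * q) (\<beta> * q + \<gamma> * t)"
      unfolding mat2_eq_iff
    proof (intro conjI)
      have "D * (\<alpha> * p + \<beta> * q) = \<alpha> * (D * p) + \<beta> * (D * q)" by (simp add: algebra_simps)
      also have "\<dots> = \<alpha> * (\<gamma> * a - \<beta> * c) + \<beta> * (\<alpha> * c - \<beta> * a)" using Dp by simp
      also have "\<dots> = D * a" unfolding D_def by (simp add: algebra_simps power2_eq_square)
      finally have "D * (\<alpha> * p + \<beta> * q) = D * a" .
      then show "a = \<alpha> * p + \<beta> * q" using D by simp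
      have "D * (\<alpha> * q + \<beta> * t) = \<alpha> * (D * q) + \<beta> * (D * t)" by (simp add: algebra_simps)
      also have "\<dots> = \<alpha> * (\<gamma> * b - \<beta> * d) + \<beta> * (\<alpha> * d - \<beta> * b)" using Dp by simp
      also have "\<dots> = D * b" unfolding D_def by (simp add: algebra_simps power2_eq_square)
      finally have "D * (\<alpha> * q + \<beta> * t) = D * b" .
      then show "b = \<alpha> * q + \<beta> * t" using D by simp
      have "D * (\<beta> * p + \<gamma> * q) = \<beta> * (D * p) + \<gamma> * (D * q)" by (simp add: algebra_simps)
      also have "\<dots> = \<beta> * (\<gamma> * a - \<beta> * c) + \<gamma> * (\<alpha> * c - \<beta> * a)" using Dp by simp
      also have "\<dots> = D * c" unfolding D_def by (simp add: algebra_simps power2_eq_square)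
      finally have "D * (\<beta> * p + \<gamma> * q) = D * c" .
      then show "c = \<beta> * p + \<gamma> * q" using D by simp
      have "D * (\<beta> * q + \<gamma> * t) = \<beta> * (D * q) + \<gamma> * (D * t)" by (simp add: algebra_simps)
      also have "\<dots> = \<beta> * (\<gamma> * b - \<beta> * d) + \<gamma> * (\<alpha> * d - \<beta> * b)" using Dp by simp
      also have "\<dots> = D * d" unfolding D_def by (simp add: algebra_simps power2_eq_square)
      finally have "D * (\<beta> * q + \<gamma> * t) = D * d" .
      then show "d = \<beta> * q + \<gamma> * t" using D by simp
    qed
    have "solves_eq (mat2 a b c d) (mat2 \<alpha> \<beta> \<beta> \<gamma>) (mat2 p q q t)"
      unfolding G by (rule solves_AS)
    then show "solves_eq (mat2 a b c d) (mat2 \<alpha> \<beta> \<beta> \<gamma>) (matrix_inv (mat2 \<alpha> \<beta> \<beta> \<gamma>) ** mat2 a b c d)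
       \<and> matrix_inv (mat2 \<alpha> \<beta> \<beta> \<gamma>) ** mat2 a b c d =
           mat2 ((\<gamma> * a - \<beta> * c) / (\<alpha> * \<gamma> - \<beta>^2)) ((\<gamma> * b - \<beta> * d) / (\<alpha> * \<gamma> - \<beta>^2))
                ((\<gamma> * b - \<beta> * d) / (\<alpha> * \<gamma> - \<beta>^2)) ((\<alpha> * d - \<beta> * b) / (\<alpha> * \<gamma> - \<beta>^2))"
      using eq unfolding D_def p_def q_def t_def by simp
  qed
  have P2: "a + d = 0 \<longrightarrow> solves_eq (mat2 a b c d) (mat2 \<alpha> \<beta> \<beta> \<gamma>) 0"
    unfolding mat2_zero solves_eq_mat2 by simp
  have P3: "a + d \<noteq> 0 \<and> \<gamma> * b - \<alpha> * c + \<beta> * (a - d) \<noteq> 0 \<longrightarrow>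
         (let k = (a + d) / ((\<alpha> * \<gamma> - \<beta>^2) * (a + d)^2 + (\<gamma> * b - \<alpha> * c + \<beta> * (a - d))^2)
          in solves_eq (mat2 a b c d) (mat2 \<alpha> \<beta> \<beta> \<gamma>)
               (mat2 (k * (\<gamma> * a * (a + d) + \<alpha> * c^2 - \<gamma> * b * c - 2 * \<beta> * a * c))
                     (k * (\<alpha> * c * d + \<gamma> * a * b - 2 * \<beta> * a * d))
                     (k * (\<alpha> * c * d + \<gamma> * a * b - 2 * \<beta> * a * d))
                     (k * (\<alpha> * d * (a + d) + \<gamma> * b^2 - \<alpha> * b * c - 2 * \<beta> * b * d))))"
  proof
    assume h: "a + d \<noteq> 0 \<and> \<gamma> * b - \<alpha> * c + \<beta> * (a - d) \<noteq> 0"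
    define E where "E = (\<alpha> * \<gamma> - \<beta>^2) * (a + d)^2 + (\<gamma> * b - \<alpha> * c + \<beta> * (a - d))^2"
    have E: "E > 0" unfolding E_def using assms h
      by (intro add_pos_nonneg mult_pos_pos) auto
    show "let k = (a + d) / ((\<alpha> * \<gamma> - \<beta>^2) * (a + d)^2 + (\<gamma> * b - \<alpha> * c + \<beta> * (a - d))^2)
          in solves_eq (mat2 a b c d) (mat2 \<alpha> \<beta> \<beta> \<gamma>)
               (mat2 (k * (\<gamma> * a * (a + d) + \<alpha> * c^2 - \<gamma> * b * c - 2 * \<beta> * a * c))
                     (k * (\<alpha> * c * d + \<gamma> * a * b - 2 * \<beta> * a * d))
                     (k * (\<alpha> * c * d + \<gamma> * a * b - 2 * \<beta> * a * d))
                     (k * (\<alpha> * d * (a + d) + \<gamma> * b^2 - \<alpha> * b * c - 2 * \<beta> * b * d)))"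
      unfolding E_def[symmetric] Let_def
      by (rule riccati[OF _ _ E_def refl refl refl]) (use E in auto)
  qed
  have P0: "\<exists>S. solves_eq (mat2 a b c d) (mat2 \<alpha> \<beta> \<beta> \<gamma>) S"
    using P1 P2 P3 by (metis (no_types, lifting))
  show ?thesis using P0 P1 P2 P3 by blast
qed

end
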